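(* Let $n,q$ be positive integers and let $f_{n,q}:\mathbb{C}^3\to\mathbb{C}$, $f_{n,q}(x,y,z)=x-3x^{2n+1}y^{2q}+2x^{3n+1}y^{3q}+yz$. Then the Łojasiewicz number at infinity of $f_{n,q}$ is $L_\infty(f_{n,q})=-\frac{n}{q}$.
   Context: For a polynomial $g:\mathbb{C}^m\to\mathbb{C}$, let $\operatorname{grad} g(x)=\left(\overline{\frac{\partial g}{\partial x_1}(x)},\dots,\overline{\frac{\partial g}{\partial x_m}(x)}\right)$. If $g$ has non-isolated singularities (critical points), set $L_\infty(g)=-\infty$. If $g$ has only isolated singularities (in particular, if it has no critical points), the Łojasiewicz number at infinity $L_\infty(g)$ is the supremum of the set of $\nu\in\mathbb{R}$ for which there exist $A>0$, $B>0$ such that for all $x\in\mathbb{C}^m$ with $\|x\|\ge B$ one has $A\|x\|^\nu\le\|\operatorname{grad} g(x)\|$. Equivalently, $L_\infty(g)=\lim_{r\to\infty}\frac{\log\varphi(r)}{\log r}$ where $\varphi(r)=\inf_{\|x\|=r}\|\operatorname{grad} g(x)\|$. *)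

theory Defs
  imports "HOL-Analysis.Analysis"
begin

definition partial_deriv :: "(complex^'m \<Rightarrow> complex) \<Rightarrow> 'm \<Rightarrow> complex^'m \<Rightarrow> complex" where
  "partial_deriv g i x = deriv (\<lambda>t. g (\<chi> j. if j = i then t else x $ j)) (x $ i)"

definition grad :: "(complex^'m \<Rightarrow> complex) \<Rightarrow> complex^'m \<Rightarrow> complex^'m" where
  "grad g x = (\<chi> i. cnj (partial_deriv g i x))"

definition critical_set :: "(complex^'m \<Rightarrow> complex) \<Rightarrow> (complex^'m) set" where
  "critical_set g = {x. grad g x = 0}"

definition has_nonisolated_singularities :: "(complex^'m \<Rightarrow> complex) \<Rightarrow> bool" where
  "has_nonisolated_singularities g = (\<exists>x \<in> critical_set g. x islimpt critical_set g)"

definition lojasiewicz_infty :: "(complex^'m \<Rightarrow> complex) \<Rightarrow> ereal" where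
  "lojasiewicz_infty g =
     (if has_nonisolated_singularities g then -\<infinity>
      else Sup {ereal \<nu> | \<nu>. \<exists>A>0. \<exists>B>0. \<forall>x. norm x \<ge> B \<longrightarrow>
                  A * norm x powr \<nu> \<le> norm (grad g x)})"

definition f_nq :: "nat \<Rightarrow> nat \<Rightarrow> complex^3 \<Rightarrow> complex" where
  "f_nq n q v = (let x = v $ 1; y = v $ 2; z = v $ 3 in
      x - 3 * x ^ (2*n+1) * y ^ (2*q) + 2 * x ^ (3*n+1) * y ^ (3*q) + y * z)"

end

theory Submission
  imports Defs
begin
lemma dpow: "((\<lambda>t::complex. t^(Suc k)) has_field_derivative of_nat (Suc k) * x^k) (at x)"
  by (rule derivative_eq_intros refl | simp)+

lemma pd1: "partial_deriv (f_nq n q) 1 v =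
   1 - 3 * of_nat (2*n+1) * (v$1) ^ (2*n) * (v$2)^(2*q) + 2 * of_nat (3*n+1) * (v$1)^(3*n) * (v$2)^(3*q)"
proof -
  have e: "(\<lambda>t. f_nq n q (\<chi> j. if j = 1 then t else v $ j)) =
     (\<lambda>t. t - 3 * t ^ (Suc (2*n)) * (v$2) ^ (2*q) + 2 * t ^ (Suc (3*n)) * (v$2) ^ (3*q) + (v$2) * (v$3))"
    by (auto simp: f_nq_def Let_def)
  have "((\<lambda>t. t - 3 * t ^ (Suc (2*n)) * (v$2) ^ (2*q) + 2 * t ^ (Suc (3*n)) * (v$2) ^ (3*q) + (v$2) * (v$3))
     has_field_derivative (1 - 3 * (of_nat (Suc (2*n)) * (v$1) ^ (2*n)) * (v$2)^(2*q) + 2 * (of_nat (Suc (3*n)) * (v$1)^(3*n)) * (v$2)^(3*q) + 0)) (at (v$1))"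
    by (intro DERIV_add DERIV_diff DERIV_cmult DERIV_cmult_right DERIV_ident DERIV_const dpow)
  from DERIV_imp_deriv[OF this] show ?thesis unfolding partial_deriv_def e
    by (simp add: algebra_simps)
qed

lemma pd2: "q > 0 \<Longrightarrow> partial_deriv (f_nq n q) 2 v =
   - 3 * of_nat (2*q) * (v$1) ^ (2*n+1) * (v$2)^(2*q-1) + 2 * of_nat (3*q) * (v$1)^(3*n+1) * (v$2)^(3*q-1) + v$3"
proof -
  assume q: "q > 0"
  have q2: "2*q = Suc (2*q-1)" "3*q = Suc (3*q-1)" using q by auto
  have e: "(\<lambda>t. f_nq n q (\<chi> j. if j = 2 then t else v $ j)) =
     (\<lambda>t. v$1 - 3 * (v$1) ^ (2*n+1) * t ^ (Suc (2*q-1)) + 2 * (v$1) ^ (3*n+1) * t ^ (Suc (3*q-1)) + t * (v$3))"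
    using q2 by (auto simp: f_nq_def Let_def)
  have "((\<lambda>t. v$1 - 3 * (v$1) ^ (2*n+1) * t ^ (Suc (2*q-1)) + 2 * (v$1) ^ (3*n+1) * t ^ (Suc (3*q-1)) + t * (v$3))
     has_field_derivative (0 - 3 * (v$1) ^ (2*n+1) * (of_nat (Suc (2*q-1)) * (v$2)^(2*q-1)) + 2 * (v$1)^(3*n+1) * (of_nat (Suc (3*q-1)) * (v$2)^(3*q-1)) + 1 * v$3)) (at (v$2))"
    by (intro DERIV_add DERIV_diff DERIV_cmult DERIV_cmult_right DERIV_ident DERIV_const dpow)
  from DERIV_imp_deriv[OF this] show ?thesis unfolding partial_deriv_def e
    using q2 by (simp add: ac_simps)
qed

lemma pd3: "partial_deriv (f_nq n q) 3 v = v$2"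
proof -
  have e: "(\<lambda>t. f_nq n q (\<chi> j. if j = 3 then t else v $ j)) =
     (\<lambda>t. v$1 - 3 * (v$1) ^ (2*n+1) * (v$2) ^ (2*q) + 2 * (v$1) ^ (3*n+1) * (v$2) ^ (3*q) + (v$2) * t)"
    by (auto simp: f_nq_def Let_def)
  have "((\<lambda>t. v$1 - 3 * (v$1) ^ (2*n+1) * (v$2) ^ (2*q) + 2 * (v$1) ^ (3*n+1) * (v$2) ^ (3*q) + (v$2) * t)
    has_field_derivative (0 + v$2 * 1)) (at (v$3))"
    by (intro DERIV_add DERIV_diff DERIV_cmult DERIV_cmult_right DERIV_ident DERIV_const)
  from DERIV_imp_deriv[OF this] show ?thesis unfolding partial_deriv_def e
    by simp
qed
lemma norm3: "norm (x::complex^3) \<le> norm (x$1) + norm (x$2) + norm(x$3)"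
proof -
  have "norm x \<le> (\<Sum>i\<in>UNIV. norm (x$i))"
    unfolding norm_vec_def by (rule L2_set_le_sum) simp
  also have "\<dots> = norm (x$1) + norm (x$2) + norm(x$3)"
    by (rule sum_3)
  finally show ?thesis .
qed

lemma gradc: "grad g v $ i = cnj (partial_deriv g i v)"
  by (simp add: grad_def)

lemma no_crit:
  assumes "q > 0" shows "\<not> has_nonisolated_singularities (f_nq n q)"
proof -
  have "critical_set (f_nq n q) = {}"
  proof (rule ccontr)
    assume "critical_set (f_nq n q) \<noteq> {}"
    then obtain v where v: "grad (f_nq n q) v = 0" by (auto simp: critical_set_def)
    have "grad (f_nq n q) v $ 3 = 0" using v by simp
    then have y: "v$2 = 0" by (simp add: gradc pd3)
    have "grad (f_nq n q) v $ 1 = 0" using v by simp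
    moreover have "(v$2)^(2*q) = 0" "(v$2)^(3*q) = 0" using y assms by simp_all
    moreover have "partial_deriv (f_nq n q) 1 v = 1 - 3 * of_nat (2*n+1) * (v$1) ^ (2*n) * (v$2)^(2*q) + 2 * of_nat (3*n+1) * (v$1)^(3*n) * (v$2)^(3*q)"
      by (rule pd1)
    ultimately show False by (simp add: gradc)
  qed
  then show ?thesis by (simp add: has_nonisolated_singularities_def)
qed

lemma lower:
  fixes n q :: nat
  assumes n: "n > 0" and q: "q > 0"
  defines "r \<equiv> 1 / (6 * (real n + 1))"
  defines "A \<equiv> min (1/2) (r powr (1 / real q))"
  assumes s1: "norm v \<ge> 1"
  shows "A * norm v powr (- real n / real q) \<le> norm (grad (f_nq n q) v)"
proof -
  define s where "s = norm v"
  define a where "a = norm (v$1)"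
  define b where "b = norm (v$2)"
  define w where "w = a^n * b^q"
  have s1': "s \<ge> 1" using s1 s_def by simp
  have a0: "a \<ge> 0" and b0: "b \<ge> 0" using a_def b_def by auto
  have as: "a \<le> s" unfolding a_def s_def by (rule Finite_Cartesian_Product.norm_nth_le)
  have w0: "w \<ge> 0" using a0 b0 w_def by simp
  have r0: "r > 0" using r_def by simp
  have A0: "A > 0" using r0 A_def by simp
  have sp: "s powr (- real n / real q) \<le> 1"
  proof -
    have "s powr (- real n / real q) \<le> s powr 0"
      using s1' by (intro powr_mono) auto
    then show ?thesis using s1' by simp
  qed
  have spos: "s powr (- real n / real q) \<ge> 0" by simp
  have g1: "norm (partial_deriv (f_nq n q) 1 v) \<le> norm (grad (f_nq n q) v)"
    using Finite_Cartesian_Product.norm_nth_le[of "grad (f_nq n q) v" 1] by (simp add: gradc)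
  have g3: "b \<le> norm (grad (f_nq n q) v)"
    using Finite_Cartesian_Product.norm_nth_le[of "grad (f_nq n q) v" 3] by (simp add: gradc pd3 b_def)
  show ?thesis
  proof (cases "w \<le> r")
    case True
    have r6: "r \<le> 1/6" using r_def by (simp add: divide_simps)
    have w2: "w^2 \<le> r^2" using True w0 by (simp add: power_mono)
    have w3: "w^3 \<le> r^2"
    proof -
      have "w^3 = w * w^2" by (simp add: power2_eq_square power3_eq_cube)
      also have "\<dots> \<le> 1 * r^2" using w2 w0 True r6 by (intro mult_mono) auto
      finally show ?thesis by simp
    qed
    have rr: "(12 * real n + 12) * r^2 \<le> 1/2"
    proof -
      have "(12 * real n + 12) * r = 2" unfolding r_def by (simp add: field_simps)
      then have "(12 * real n + 12) * r^2 = 2 * r" by (simp add: power2_eq_square mult.assoc[symmetric])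
      then show ?thesis using r6 by simp
    qed
    have key: "3 * (2 * real n + 1) * w^2 + 2 * (3 * real n + 1) * w^3 \<le> 1/2"
    proof -
      have "3 * (2 * real n + 1) * w^2 + 2 * (3 * real n + 1) * w^3
          \<le> 3 * (2 * real n + 1) * r^2 + 2 * (3 * real n + 1) * r^2"
        using w2 w3 by (intro add_mono mult_left_mono) auto
      also have "\<dots> \<le> (12 * real n + 12) * r^2" by (simp add: algebra_simps)
      finally show ?thesis using rr by simp
    qed
    define X where "X = 3 * of_nat (2*n+1) * (v$1) ^ (2*n) * (v$2)^(2*q)"
    define Y where "Y = 2 * of_nat (3*n+1) * (v$1)^(3*n) * (v$2)^(3*q)"
    have p1: "a^(2*n) * b^(2*q) = w^2" unfolding w_def
      by (simp add: power_mult_distrib power_mult[symmetric] mult.commute)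
    have p2: "a^(3*n) * b^(3*q) = w^3" unfolding w_def
      by (simp add: power_mult_distrib power_mult[symmetric] mult.commute)
    have cX: "norm (3 * of_nat (2*n+1) :: complex) = 3*(2*real n+1)"
      by (simp only: norm_mult norm_numeral norm_of_nat) simp
    have cY: "norm (2 * of_nat (3*n+1) :: complex) = 2*(3*real n+1)"
      by (simp only: norm_mult norm_numeral norm_of_nat) simp
    have nX: "norm X = 3 * (2 * real n + 1) * w^2"
      unfolding p1[symmetric] a_def b_def X_def by (simp only: norm_mult norm_power norm_numeral norm_of_nat) (simp add: algebra_simps)
    have nY: "norm Y = 2 * (3 * real n + 1) * w^3"
      unfolding p2[symmetric] a_def b_def Y_def by (simp only: norm_mult norm_power norm_numeral norm_of_nat) (simp add: algebra_simps)
    have "norm (1 - X + Y) \<ge> 1 - norm X - norm Y"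
    proof -
      have h1: "norm (1::complex) - norm X \<le> norm (1 - X)" by (rule norm_triangle_ineq2)
      have h2: "norm (1 - X) - norm (-Y) \<le> norm ((1-X) - (-Y))" by (rule norm_triangle_ineq2)
      show ?thesis using h1 h2 by simp
    qed
    then have "norm (1 - X + Y) \<ge> 1/2" using key nX nY by linarith
    moreover have "partial_deriv (f_nq n q) 1 v = 1 - X + Y" by (simp only: pd1 X_def Y_def)
    ultimately have "norm (partial_deriv (f_nq n q) 1 v) \<ge> 1/2" by simp
    moreover have "A * s powr (- real n / real q) \<le> 1/2 * 1"
      using sp spos A0 A_def by (intro mult_mono) auto
    ultimately show ?thesis using g1 unfolding s_def by linarith
  next
    case False
    have wle: "w \<le> b^q * s^n" unfolding w_def
      using mult_right_mono[OF power_mono[OF as a0] zero_le_power[OF b0]] by (simp add: mult.commute)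
    have spos': "s > 0" using s1' by simp
    have "r * s powr (- real n) \<le> b^q"
    proof -
      have "r \<le> b^q * s^n" using False wle by simp
      then have "r / s^n \<le> b^q" using spos' by (simp add: divide_simps)
      then show ?thesis using spos' by (simp add: powr_minus powr_realpow divide_inverse)
    qed
    then have "(r * s powr (- real n)) powr (1/real q) \<le> (b^q) powr (1/real q)"
      using r0 spos' by (intro powr_mono2) auto
    moreover have "(b^q) powr (1/real q) = b"
    proof (cases "b = 0")
      case True then show ?thesis using q by simp
    next
      case False
      then have "b > 0" using b0 by simp
      then have "b^q = b powr (real q)" by (simp add: powr_realpow)
      then show ?thesis using q \<open>b > 0\<close> by (simp add: powr_powr)
    qed
    moreover have "(r * s powr (- real n)) powr (1/real q) = r powr (1/real q) * s powr (- real n / real q)"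
      using r0 spos' by (simp add: powr_mult powr_powr)
    ultimately have "r powr (1/real q) * s powr (- real n / real q) \<le> b" by simp
    moreover have "A * s powr (- real n / real q) \<le> r powr (1/real q) * s powr (- real n / real q)"
      using A_def spos by (intro mult_right_mono) auto
    ultimately show ?thesis using g3 unfolding s_def by linarith
  qed
qed
lemma upper:
  fixes n q :: nat and A B \<nu> :: real
  assumes n: "n > 0" and q: "q > 0" and A: "A > 0"
    and H: "\<forall>v. norm v \<ge> B \<longrightarrow> A * norm v powr \<nu> \<le> norm (grad (f_nq n q) v)"
  shows "\<nu> \<le> - real n / real q"
proof (rule ccontr)
  assume "\<not> \<nu> \<le> - real n / real q"
  then have nu: "\<nu> > - real n / real q" by simp
  define \<mu> where "\<mu> = min \<nu> (- real n / (2 * real q))"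
  have nq: "real n / real q > 0" using n q by simp
  have mu0: "\<mu> < 0" unfolding \<mu>_def using nq n q by (simp add: min_less_iff_disj)
  have mu1: "\<mu> > - real n / real q" unfolding \<mu>_def using nu nq n q by (simp add: field_simps)
  have mu2: "\<mu> \<le> \<nu>" unfolding \<mu>_def by simp
  define e where "e = \<mu> + real n / real q"
  have e0: "e > 0" using mu1 e_def by simp
  define K where "K = 2 / (A * 2 powr \<mu>)"
  have K0: "K > 0" using A K_def by simp
  define x where "x = max (max B 1) (K powr (1/e))"
  have x1: "x \<ge> 1" and xB: "x \<ge> B" unfolding x_def by auto
  have x0: "x > 0" using x1 by simp
  have xe: "x powr e \<ge> K"
  proof -
    have "(K powr (1/e)) powr e \<le> x powr e"
      using e0 K0 by (intro powr_mono2) (auto simp: x_def)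
    moreover have "(K powr (1/e)) powr e = K" using e0 K0 by (simp add: powr_powr)
    ultimately show ?thesis by simp
  qed
  define t where "t = x powr (- real n / real q)"
  have t0: "t > 0" using x0 t_def by simp
  have t1: "t \<le> 1"
  proof -
    have "x powr (- real n / real q) \<le> x powr 0" using x1 nq by (intro powr_mono) auto
    then show ?thesis using x0 t_def by simp
  qed
  have xt: "x^n * t^q = 1"
  proof -
    have "t^q = x powr (- real n / real q * real q)"
      unfolding t_def using x0 by (simp add: powr_realpow[symmetric] powr_powr)
    also have "\<dots> = x powr (- real n)" using q by simp
    finally have "t^q = inverse (x^n)" using x0 by (simp add: powr_minus powr_realpow)
    then show ?thesis using x0 by simp
  qed
  define v :: "complex^3" where "v = (\<chi> j. if j = 1 then of_real x else if j = 2 then of_real t else 0)"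
  have v1: "v$1 = of_real x" and v2: "v$2 = of_real t" and v3: "v$3 = 0" unfolding v_def by auto
  have nvx: "norm v \<ge> x"
    using Finite_Cartesian_Product.norm_nth_le[of v 1] v1 x0 by simp
  have nv2: "norm v \<le> 2 * x"
    using norm3[of v] v1 v2 v3 x0 t0 t1 x1 by simp
  have nvB: "norm v \<ge> B" using nvx xB by simp
  have nv0: "norm v > 0" using nvx x0 by linarith
  define U where "U = (v$1)^n * (v$2)^q"
  have U1: "U = 1" unfolding U_def v1 v2 using xt
    by (simp only: of_real_power[symmetric] of_real_mult[symmetric] xt of_real_1)
  have e1: "(v$1)^(2*n) * (v$2)^(2*q) = U^2"
    unfolding U_def by (simp add: power_mult_distrib power_mult[symmetric] mult.commute)
  have e2: "(v$1)^(3*n) * (v$2)^(3*q) = U^3"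
    unfolding U_def by (simp add: power_mult_distrib power_mult[symmetric] mult.commute)
  have c1: "partial_deriv (f_nq n q) 1 v = 0"
  proof -
    have "partial_deriv (f_nq n q) 1 v = 1 - 3 * of_nat (2*n+1) * ((v$1)^(2*n) * (v$2)^(2*q)) + 2 * of_nat (3*n+1) * ((v$1)^(3*n) * (v$2)^(3*q))"
      by (simp add: pd1 mult.assoc)
    also have "\<dots> = 0" unfolding e1 e2 U1 by simp
    finally show ?thesis .
  qed
  have c2: "partial_deriv (f_nq n q) 2 v = 0"
  proof -
    have p: "(v$1)^(3*n+1) * (v$2)^(3*q-1) = ((v$1)^(2*n+1) * (v$2)^(2*q-1)) * U"
    proof -
      have a: "3*n+1 = (2*n+1) + n" and b: "3*q-1 = (2*q-1) + q" using q by auto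
      show ?thesis unfolding a b U_def by (simp only: power_add mult_ac)
    qed
    have "partial_deriv (f_nq n q) 2 v = - 3 * of_nat (2*q) * ((v$1) ^ (2*n+1) * (v$2)^(2*q-1)) + 2 * of_nat (3*q) * ((v$1)^(3*n+1) * (v$2)^(3*q-1)) + v$3"
      using pd2[OF q] by (simp add: mult.assoc)
    also have "\<dots> = 0" unfolding p U1 v3 by (simp add: algebra_simps)
    finally show ?thesis .
  qed
  have ng: "norm (grad (f_nq n q) v) \<le> t"
    using norm3[of "grad (f_nq n q) v"] by (simp add: gradc c1 c2 pd3 v2 t0 less_imp_le)
  have "A * norm v powr \<mu> \<le> A * norm v powr \<nu>"
    using A mu2 nvx x1 by (intro mult_left_mono powr_mono) auto
  also have "\<dots> \<le> t" using H nvB ng by fastforce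
  finally have h1: "A * norm v powr \<mu> \<le> t" .
  have "(2 * x) powr \<mu> \<le> norm v powr \<mu>" using mu0 nv0 nv2 by (intro powr_mono2') auto
  then have "2 powr \<mu> * x powr \<mu> \<le> norm v powr \<mu>" using x0 by (simp add: powr_mult)
  then have "A * (2 powr \<mu> * x powr \<mu>) \<le> A * norm v powr \<mu>" using A by (intro mult_left_mono) auto
  then have "A * (2 powr \<mu> * x powr \<mu>) \<le> t" using h1 by linarith
  then have "A * (2 powr \<mu> * x powr \<mu>) * x powr (real n / real q) \<le> t * x powr (real n / real q)"
    using x0 by (intro mult_right_mono) auto
  moreover have "t * x powr (real n / real q) = 1"
    unfolding t_def using x0 by (simp add: powr_add[symmetric])
  moreover have "A * (2 powr \<mu> * x powr \<mu>) * x powr (real n / real q) = A * 2 powr \<mu> * x powr e"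
    unfolding e_def using x0 by (simp add: powr_add mult_ac)
  ultimately have "A * 2 powr \<mu> * x powr e \<le> 1" by simp
  moreover have "A * 2 powr \<mu> * x powr e \<ge> A * 2 powr \<mu> * K"
    using xe A by (intro mult_left_mono) auto
  moreover have "A * 2 powr \<mu> * K = 2" unfolding K_def using A by simp
  ultimately show False by simp
qed

theorem proposition1p4:
  fixes n q :: nat
  assumes "n > 0" and "q > 0"
  shows "lojasiewicz_infty (f_nq n q) = ereal (- real n / real q)"
proof -
  define r where "r = 1 / (6 * (real n + 1))"
  define A where "A = min (1/2) (r powr (1 / real q))"
  have A0: "A > 0" unfolding A_def r_def by simp
  have mem: "ereal (- real n / real q) \<in> {ereal \<nu> | \<nu>. \<exists>A>0. \<exists>B>0. \<forall>x. norm x \<ge> B \<longrightarrow>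
                  A * norm x powr \<nu> \<le> norm (grad (f_nq n q) x)}"
  proof -
    have "\<forall>x. norm x \<ge> 1 \<longrightarrow> A * norm x powr (- real n / real q) \<le> norm (grad (f_nq n q) x)"
      using lower[OF assms] unfolding A_def r_def by blast
    then have "\<exists>A>0. \<exists>B>0. \<forall>x. norm x \<ge> B \<longrightarrow> A * norm x powr (- real n / real q) \<le> norm (grad (f_nq n q) x)"
      using A0 by (intro exI[of _ A] conjI exI[of _ 1]) auto
    then show ?thesis by blast
  qed
  show ?thesis unfolding lojasiewicz_infty_def using no_crit[OF assms(2)]
  proof (simp only: if_False, intro Sup_eqI)
    fix y assume "y \<in> {ereal \<nu> | \<nu>. \<exists>A>0. \<exists>B>0. \<forall>x. norm x \<ge> B \<longrightarrow>
                  A * norm x powr \<nu> \<le> norm (grad (f_nq n q) x)}"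
    then obtain \<nu> A B where y: "y = ereal \<nu>" and "A > 0"
      and "\<forall>x. norm x \<ge> B \<longrightarrow> A * norm x powr \<nu> \<le> norm (grad (f_nq n q) x)" by blast
    then have "\<nu> \<le> - real n / real q" using upper[OF assms] by blast
    then show "y \<le> ereal (- real n / real q)" using y by simp
  next
    fix y assume "\<And>z. z \<in> {ereal \<nu> | \<nu>. \<exists>A>0. \<exists>B>0. \<forall>x. norm x \<ge> B \<longrightarrow>
                  A * norm x powr \<nu> \<le> norm (grad (f_nq n q) x)} \<Longrightarrow> z \<le> y"
    then show "ereal (- real n / real q) \<le> y" using mem by blast
  qed
qed
end
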